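(* Let $n\ge1$. For every $c\in M_n$ we have $C(c)\in M_n$ and $C^n(c)=c$, where $C$ is the crawl map.
   Context: $M_n$ is the set of integer sequences $c=(c_1,\dots,c_n)$ for which there is $0\le k\le n-1$ with $c_1=\dots=c_k=0$, $c_{k+1},\dots,c_n>0$, and $\sum_{i=k+1}^{n}c_i=n$. The crawl map $C:M_n\to M_n$ sends $c$ to $c'$ where, for $1\le i\le n-1$, $c'_i=\max\{0,c_{i+1}-1\}$ if $c_1,\dots,c_i\le1$, and $c'_i=c_{i+1}$ otherwise; and $c'_n=n-\sum_{i=1}^{n-1}c'_i$. *)

theory Defs
  imports Main
begin

(* A sequence c = (c_1,...,c_n) is represented as an int list of length n;
   c_i is  c ! (i - 1). *)

definition M :: "nat \<Rightarrow> int list set" where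
  "M n = {c. length c = n \<and>
      (\<exists>k. k \<le> n - 1 \<and>
           (\<forall>i. 1 \<le> i \<and> i \<le> k \<longrightarrow> c ! (i - 1) = 0) \<and>
           (\<forall>i. k + 1 \<le> i \<and> i \<le> n \<longrightarrow> c ! (i - 1) > 0) \<and>
           (\<Sum>i = k + 1..n. c ! (i - 1)) = int n)}"

definition crawl_entry :: "int list \<Rightarrow> nat \<Rightarrow> int" where
  "crawl_entry c i =
     (if \<forall>j. 1 \<le> j \<and> j \<le> i \<longrightarrow> c ! (j - 1) \<le> 1
      then max 0 (c ! i - 1)
      else c ! i)"

definition crawl :: "nat \<Rightarrow> int list \<Rightarrow> int list" where
  "crawl n c =
     map (crawl_entry c) [1..<n] @ [int n - (\<Sum>i = 1..n - 1. crawl_entry c i)]"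

end

theory Submission
  imports Defs
begin


lemma sum_idx0: "(\<Sum>i = k + 1..k + m. (g::nat\<Rightarrow>int) (i - 1)) = (\<Sum>i<m. g (k + i))"
  by (induction m) auto

lemma sum_idx: "k \<le> length (c::int list) \<Longrightarrow> (\<Sum>i = k + 1..length c. c ! (i - 1)) = sum_list (drop k c)"
proof -
  assume "k \<le> length c"
  then obtain m where m: "length c = k + m" by (metis le_add_diff_inverse)
  have "sum_list (drop k c) = (\<Sum>i<m. drop k c ! i)"
    using m by (simp add: sum_list_sum_nth atLeast0LessThan)
  also have "\<dots> = (\<Sum>i<m. c ! (k + i))" using m by simp
  finally show ?thesis using m sum_idx0[where g="\<lambda>i. c ! i" and k=k and m=m] by simp
qed

lemma crawl_alt: "crawl n c = map (crawl_entry c) [1..<n] @ [int n - sum_list (map (crawl_entry c) [1..<n])]"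
proof -
  have "{1..n-1} = set [1..<n]" by auto
  then show ?thesis unfolding crawl_def by (metis sum_set_upt_conv_sum_list_nat)
qed



lemma M_iff: "n \<ge> 1 \<Longrightarrow> c \<in> M n \<longleftrightarrow> length c = n \<and> (\<exists>k l. c = replicate k 0 @ l \<and> l \<noteq> [] \<and> (\<forall>x\<in>set l. 0 < x) \<and> sum_list l = int n)"
proof -
 assume n1: "n \<ge> 1"
 show ?thesis
 proof
  assume "c \<in> M n"
  then obtain k where len: "length c = n" and k: "k \<le> n - 1"
    and z: "\<forall>i. 1 \<le> i \<and> i \<le> k \<longrightarrow> c ! (i - 1) = 0"
    and p: "\<forall>i. k + 1 \<le> i \<and> i \<le> n \<longrightarrow> c ! (i - 1) > 0"
    and s: "(\<Sum>i = k + 1..n. c ! (i - 1)) = int n" unfolding M_def by blast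
  have kn: "k < n" using k n1 by simp
  have t: "take k c = replicate k 0"
  proof (rule nth_equalityI)
    fix i assume "i < length (take k c)"
    then show "take k c ! i = replicate k 0 ! i" using z[rule_format, of "i+1"] kn len by simp
  qed (use kn len in simp)
  have "c = replicate k 0 @ drop k c" by (metis append_take_drop_id t)
  moreover have "drop k c \<noteq> []" using kn len by simp
  moreover have "\<forall>x\<in>set (drop k c). 0 < x"
  proof
    fix x assume "x \<in> set (drop k c)"
    then obtain j where "j < length (drop k c)" "x = drop k c ! j" by (metis in_set_conv_nth)
    then show "0 < x" using p[rule_format, of "k + j + 1"] len by simp
  qed
  moreover have "sum_list (drop k c) = int n" using s sum_idx[of k c] kn len by simp
  ultimately show "length c = n \<and> (\<exists>k l. c = replicate k 0 @ l \<and> l \<noteq> [] \<and> (\<forall>x\<in>set l. 0 < x) \<and> sum_list l = int n)"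
    using len by blast
next
  assume "length c = n \<and> (\<exists>k l. c = replicate k 0 @ l \<and> l \<noteq> [] \<and> (\<forall>x\<in>set l. 0 < x) \<and> sum_list l = int n)"
  then obtain k l where len: "length c = n" and c: "c = replicate k 0 @ l" and l: "l \<noteq> []"
    and p: "\<forall>x\<in>set l. 0 < x" and s: "sum_list l = int n" by blast
  have kn: "k \<le> n - 1" using len c l by (cases l) auto
  have "\<forall>i. 1 \<le> i \<and> i \<le> k \<longrightarrow> c ! (i - 1) = 0" using c by (auto simp: nth_append)
  moreover have "\<forall>i. k + 1 \<le> i \<and> i \<le> n \<longrightarrow> c ! (i - 1) > 0"
  proof (intro allI impI)
    fix i assume i: "k + 1 \<le> i \<and> i \<le> n"
    then have "c ! (i - 1) = l ! (i - 1 - k)" using c i by (auto simp: nth_append)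
    moreover have "i - 1 - k < length l" using i len c by auto
    ultimately show "c ! (i - 1) > 0" using p nth_mem by metis
  qed
  moreover have "(\<Sum>i = k + 1..n. c ! (i - 1)) = int n"
    using sum_idx[of k c] len c s by simp
  ultimately show "c \<in> M n" unfolding M_def using len kn by blast
qed
qed



lemma cnth: "i < k + r + 1 + length rest \<Longrightarrow>
  (replicate k 0 @ replicate r 1 @ a # rest) ! i =
   (if i < k then 0 else if i < k + r then 1 else if i = k + r then a else rest ! (i - k - r - 1))"
  by (auto simp: nth_append nth_Cons')

lemma crawl_gen:
  fixes a :: int and rest :: "int list"
  assumes c: "c = replicate k 0 @ replicate r 1 @ a # rest" and len: "length c = n"
    and a: "a \<ge> 2" and kr: "k + r \<ge> 1" and s: "sum_list c = int n"
  shows "crawl n c = replicate (k + r - 1) 0 @ (a - 1) # rest @ [int r + 1]"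
proof -
  have n: "n = k + r + 1 + length rest" using c len by simp
  have cn: "c ! i = (if i < k then 0 else if i < k + r then 1 else if i = k + r then a else rest ! (i - k - r - 1))"
    if "i < n" for i
    unfolding c by (rule cnth) (use that n in simp)
  have m: "map (crawl_entry c) [1..<n] = replicate (k + r - 1) 0 @ (a - 1) # rest"
  proof (rule nth_equalityI)
    show "length (map (crawl_entry c) [1..<n]) = length (replicate (k + r - 1) 0 @ (a - 1) # rest)"
      using n kr by simp
  next
    fix j assume "j < length (map (crawl_entry c) [1..<n])"
    then have j: "j + 1 < n" by simp
    have L: "(replicate (k + r - 1) 0 @ (a - 1) # rest) ! j =
      (if j < k + r - 1 then 0 else if j = k + r - 1 then a - 1 else rest ! (j - k - r))"
      using j n kr by (auto simp: nth_append nth_Cons')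
    show "map (crawl_entry c) [1..<n] ! j = (replicate (k + r - 1) 0 @ (a - 1) # rest) ! j"
    proof (cases "j + 1 \<le> k + r")
      case True
      then have "\<forall>i. 1 \<le> i \<and> i \<le> j + 1 \<longrightarrow> c ! (i - 1) \<le> 1" using cn n by auto
      then have "crawl_entry c (j+1) = max 0 (c ! (j + 1) - 1)" unfolding crawl_entry_def by simp
      have "c ! (j+1) = (if j + 1 < k + r then c ! (j+1) else a)" using cn[of "j+1"] j True by simp
      moreover have "j + 1 < k + r \<Longrightarrow> c ! (j+1) = 0 \<or> c ! (j+1) = 1" using cn[of "j+1"] j by simp
      moreover have "map (crawl_entry c) [1..<n] ! j = crawl_entry c (j+1)" using j by simp
      ultimately show ?thesis using j L True a \<open>crawl_entry c (j+1) = max 0 (c ! (j + 1) - 1)\<close>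
        by (cases "j + 1 < k + r") auto
    next
      case False
      have "c ! (k + r) = a" using cn n by simp
      have "\<not> (\<forall>i. 1 \<le> i \<and> i \<le> j + 1 \<longrightarrow> c ! (i - 1) \<le> 1)"
      proof
        assume "\<forall>i. 1 \<le> i \<and> i \<le> j + 1 \<longrightarrow> c ! (i - 1) \<le> 1"
        moreover have "1 \<le> k + r + 1 \<and> k + r + 1 \<le> j + 1" using False by simp
        ultimately have "c ! (k + r + 1 - 1) \<le> 1" by blast
        then show False using \<open>c ! (k + r) = a\<close> a by simp
      qed
      then have "crawl_entry c (j+1) = c ! (j + 1)" unfolding crawl_entry_def by (simp only: if_False)
      moreover have "map (crawl_entry c) [1..<n] ! j = crawl_entry c (j+1)" using j by simp
      moreover have "c ! (j+1) = rest ! (j - k - r)" using cn[of "j+1"] j False by simp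
      moreover have "\<not> j < k + r - 1" "j \<noteq> k + r - 1" using False kr by auto
      ultimately show ?thesis using L by (simp only: if_False)
    qed
  qed
  have "sum_list c = int r + a + sum_list rest" using c by (simp add: sum_list_replicate)
  then show ?thesis unfolding crawl_alt m using s by (simp add: sum_list_replicate)
qed

lemma crawl_ones:
  assumes "n \<ge> 1"
  shows "crawl n (replicate n 1) = replicate (n - 1) 0 @ [int n]"
proof -
  have "map (crawl_entry (replicate n 1)) [1..<n] = replicate (n - 1) 0"
    by (rule nth_equalityI) (auto simp: crawl_entry_def)
  then show ?thesis unfolding crawl_alt by (simp add: sum_list_replicate)
qed



fun pacc :: "nat \<Rightarrow> bool list \<Rightarrow> nat list" where
  "pacc k [] = []"
| "pacc k (b # w) = (if b then (k + 1) # pacc 0 w else pacc (k + 1) w)"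

definition D :: "bool list \<Rightarrow> int list" where
  "D w = replicate (length w - length (pacc 0 w)) 0 @ map int (pacc 0 w)"

fun enc :: "nat list \<Rightarrow> bool list" where
  "enc [] = []"
| "enc (a # l) = replicate (a - 1) False @ True # enc l"

lemma pacc_repF: "pacc k (replicate j False @ w) = pacc (k + j) w"
  by (induction j arbitrary: k) auto

lemma pacc_repT: "pacc 0 (replicate r True @ w) = replicate r 1 @ pacc 0 w"
  by (induction r) auto

lemma pacc_enc: "\<forall>x\<in>set l. x \<ge> 1 \<Longrightarrow> pacc 0 (enc l) = l"
  by (induction l) (auto simp: pacc_repF)

lemma len_enc: "\<forall>x\<in>set l. x \<ge> 1 \<Longrightarrow> length (enc l) = sum_list l"
  by (induction l) auto

lemma last_enc: "l \<noteq> [] \<Longrightarrow> last (enc l) = True"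
proof (induction l)
  case (Cons a l) then show ?case by (cases l) auto
qed simp

lemma pacc_len: "length (pacc k w) \<le> length w"
  by (induction k w rule: pacc.induct) (auto intro: le_SucI)

lemma pacc_pos: "x \<in> set (pacc k w) \<Longrightarrow> x \<ge> 1"
  by (induction k w rule: pacc.induct) (auto split: if_splits)

lemma pacc_sum: "sum_list (pacc k (X @ [True])) = k + length X + 1"
  by (induction X arbitrary: k) auto

lemma pacc_ne: "True \<in> set X \<Longrightarrow> pacc k X \<noteq> []"
  by (induction k X rule: pacc.induct) auto

lemma pacc_Suc: "True \<in> set X \<Longrightarrow> \<exists>p rest. p \<ge> 1 \<and> (\<forall>k. pacc k X = (k + p) # rest)"
proof (induction X)
  case Nil then show ?case by simp
next
  case (Cons b Y)
  show ?case
  proof (cases b)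
    case True then show ?thesis by auto
  next
    case False
    then obtain p rest where "p \<ge> 1" "\<forall>k. pacc k Y = (k + p) # rest" using Cons by auto
    then show ?thesis using False by (intro exI[of _ "p + 1"] exI[of _ rest]) auto
  qed
qed

lemma pacc_app: "pacc k (X @ True # Y) = pacc k (X @ [True]) @ pacc 0 Y"
  by (induction X arbitrary: k) auto

lemma sum_ge_len: "\<forall>x\<in>set l. (x::nat) \<ge> 1 \<Longrightarrow> sum_list l \<ge> length l"
  by (induction l) auto

lemma D_M:
  assumes "length w = n" "w \<noteq> []" "last w = True"
  shows "D w \<in> M n"
proof -
  obtain X where X: "w = X @ [True]" using assms by (metis append_butlast_last_id)
  have n1: "n \<ge> 1" using assms by (cases w) auto
  show ?thesis unfolding M_iff[OF n1] D_def
  proof (intro conjI exI)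
    show "length (replicate (length w - length (pacc 0 w)) 0 @ map int (pacc 0 w)) = n"
      using pacc_len[of 0 w] assms by simp
    show "map int (pacc 0 w) \<noteq> []" using pacc_ne[of w 0] X by simp
    show "\<forall>x\<in>set (map int (pacc 0 w)). 0 < x" using pacc_pos by fastforce
    have "sum_list (map int (pacc 0 w)) = int (sum_list (pacc 0 w))" by (simp add: sum_list_of_nat)
    then show "sum_list (map int (pacc 0 w)) = int n" using pacc_sum[of 0 X] X assms by simp
  qed simp
qed

lemma M_D:
  assumes "n \<ge> 1" "c \<in> M n"
  shows "\<exists>w. length w = n \<and> w \<noteq> [] \<and> last w = True \<and> D w = c"
proof -
  obtain k l where len: "length c = n" and c: "c = replicate k 0 @ l" and l: "l \<noteq> []"
    and p: "\<forall>x\<in>set l. 0 < x" and s: "sum_list l = int n" using M_iff[OF assms(1)] assms(2) by blast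
  define ln where "ln = map nat l"
  have lp: "\<forall>x\<in>set ln. x \<ge> 1" using p unfolding ln_def by auto
  have il: "map int ln = l" using p unfolding ln_def by (induction l) auto
  have sn: "sum_list ln = n" using s il by (metis nat_int sum_list_of_nat)
  let ?w = "enc ln"
  have "length ?w = n" using len_enc[OF lp] sn by simp
  moreover have "?w \<noteq> []" using calculation assms(1) by auto
  moreover have "last ?w = True" using l last_enc[of ln] unfolding ln_def by simp
  moreover have "D ?w = c" unfolding D_def pacc_enc[OF lp] using calculation(1) il c len
    by (metis add_diff_cancel_right' length_append length_map length_replicate)
  ultimately show ?thesis by blast
qed



definition W :: "(nat \<Rightarrow> bool) \<Rightarrow> nat \<Rightarrow> nat \<Rightarrow> bool list" where
  "W u n s = map u [s..<s + n]"

lemma map_split: "a \<le> b \<Longrightarrow> b \<le> c \<Longrightarrow> map u [a..<c] = map u [a..<b] @ map u [b..<c]"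
  by (metis le_add_diff_inverse map_append upt_add_eq_append)

lemma map_const: "(\<forall>i. a \<le> i \<and> i < b \<longrightarrow> u i = x) \<Longrightarrow> map u [a..<b] = replicate (b - a) x"
  by (rule nth_equalityI) auto

lemma D_sum: "last w = True \<Longrightarrow> w \<noteq> [] \<Longrightarrow> sum_list (D w) = int (length w)"
proof -
  assume "last w = True" "w \<noteq> []"
  then obtain X where X: "w = X @ [True]" by (metis append_butlast_last_id)
  show ?thesis unfolding D_def using pacc_sum[of 0 X] X
    by (simp add: sum_list_replicate sum_list_of_nat)
qed

lemma step:
  assumes anti: "\<forall>i. u (i + n) = (\<not> u i)" and n1: "n \<ge> 1" and s1: "s \<ge> 1" and us: "\<not> u (s - 1)"
  defines "t \<equiv> LEAST t. s \<le> t \<and> \<not> u t"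
  shows "crawl n (D (W u n s)) = D (W u n (t + 1))"
proof -
  have ex: "s \<le> s + n \<and> \<not> u (s + n) \<or> (s \<le> s \<and> \<not> u s)" using anti[rule_format, of s] by auto
  have "s \<le> t \<and> \<not> u t" unfolding t_def by (rule LeastI_ex) (use ex in blast)
  then have st: "s \<le> t" and ut: "\<not> u t" by auto
  have before: "u i" if "s \<le> i" "i < t" for i
    using not_less_Least[of i "\<lambda>t. s \<le> t \<and> \<not> u t"] that unfolding t_def by blast
  have tle: "t \<le> s + n"
  proof (cases "u s")
    case True
    then have "\<not> u (s + n)" using anti[rule_format, of s] by simp
    then show ?thesis unfolding t_def by (intro Least_le) simp
  next
    case False
    then have "t \<le> s" unfolding t_def by (intro Least_le) simp
    then show ?thesis by simp
  qed
  have "s - 1 + n = s + n - 1" using s1 by simp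
  then have ulast: "u (s + n - 1)" using anti[rule_format, of "s - 1"] us by simp
  show ?thesis
  proof (cases "t < s + n")
    case True
    define r where "r = t - s"
    define X where "X = map u [t + 1..<s + n]"
    have "t \<noteq> s + n - 1" using ulast ut by auto
    then have tn: "t + 1 < s + n" using True by linarith
    have Ws: "W u n s = replicate r True @ False # X"
    proof -
      have "W u n s = map u [s..<t] @ map u [t..<s + n]" unfolding W_def by (rule map_split) (use st True in auto)
      moreover have "map u [s..<t] = replicate r True" unfolding r_def by (rule map_const) (use before in auto)
      moreover have "map u [t..<s + n] = False # X" unfolding X_def using True ut by (simp add: upt_conv_Cons)
      ultimately show ?thesis by simp
    qed
    have Xne: "X \<noteq> []" unfolding X_def using tn by auto
    have Xl: "last X = True" unfolding X_def using tn ulast s1 by (simp add: last_map)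
    obtain Y where Y: "X = Y @ [True]" using Xne Xl by (metis append_butlast_last_id)
    have Wt: "W u n (t + 1) = X @ replicate r False @ [True]"
    proof -
      have "W u n (t + 1) = map u [t + 1..<s + n] @ map u [s + n..<t + 1 + n]" unfolding W_def
        by (rule map_split) (use tn st in auto)
      moreover have "map u [s + n..<t + 1 + n] = map u [s + n..<t + n] @ [u (t + n)]" using st by simp
      moreover have "map u [s + n..<t + n] = replicate r False"
      proof -
        have "map u [s + n..<t + n] = replicate (t + n - (s + n)) False"
        proof (rule map_const, intro allI impI)
          fix i assume i: "s + n \<le> i \<and> i < t + n"
          then have "u (i - n)" using before by auto
          moreover have "u (i - n + n) = (\<not> u (i - n))" using anti[rule_format, of "i - n"] by blast
          ultimately show "u i = False" using i by simp
        qed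
        then show ?thesis unfolding r_def by simp
      qed
      moreover have "u (t + n) = True" using anti[rule_format, of t] ut by simp
      ultimately show ?thesis unfolding X_def by simp
    qed
    obtain p rest where p: "p \<ge> 1" and pr: "\<forall>k. pacc k X = (k + p) # rest" using pacc_Suc[of X] Y by auto
    have P1: "pacc 0 (W u n s) = replicate r 1 @ (1 + p) # rest" unfolding Ws pacc_repT using pr by simp
    have P2: "pacc 0 (W u n (t + 1)) = p # rest @ [r + 1]" unfolding Wt Y
      using pacc_app[of 0 Y "replicate r False @ [True]"] pr Y pacc_repF[of 0 r "[True]"] by simp
    have lW: "length (W u n s) = n" "length (W u n (t + 1)) = n" unfolding W_def by auto
    have restpos: "\<forall>x\<in>set rest. x \<ge> 1" using pacc_pos[of _ 0 X] pr by auto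
    have "sum_list (pacc 0 (W u n s)) = n" unfolding Ws Y
      using pacc_sum[of 0 "replicate r True @ False # Y"] lW(1) Ws Y by simp
    then have sumeq: "r + (1 + p) + sum_list rest = n" unfolding P1 by (simp add: sum_list_replicate)
    have "sum_list rest \<ge> length rest" using sum_ge_len[OF restpos] .
    then have big: "n \<ge> r + 2 + length rest" using sumeq p by linarith
    define k where "k = n - (r + 1 + length rest)"
    have DWs: "D (W u n s) = replicate k 0 @ replicate r 1 @ int (1 + p) # map int rest"
      unfolding D_def P1 lW k_def by simp
    have "crawl n (D (W u n s)) = replicate (k + r - 1) 0 @ (int (1 + p) - 1) # map int rest @ [int r + 1]"
    proof (rule crawl_gen[OF DWs])
      show "length (D (W u n s)) = n" unfolding DWs k_def using big by simp
      show "2 \<le> int (1 + p)" using p by simp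
      show "1 \<le> k + r" unfolding k_def using big by simp
      show "sum_list (D (W u n s)) = int n" using D_sum[of "W u n s"] Ws Y lW by simp
    qed
    also have "\<dots> = D (W u n (t + 1))" unfolding D_def P2 lW k_def using big by simp
    finally show ?thesis .
  next
    case False
    then have t: "t = s + n" using tle by simp
    have allT: "u i" if "s \<le> i" "i < s + n" for i using before that t by simp
    have "map u [s..<s + n] = replicate (s + n - s) True" by (rule map_const) (use allT in auto)
    then have Ws: "W u n s = replicate n True" unfolding W_def by simp
    have Wt: "W u n (t + 1) = replicate (n - 1) False @ [True]"
    proof -
      have e: "s + n + 1 + n = Suc (s + n + n)" by simp
      have "[s + n + 1..<s + n + 1 + n] = [s + n + 1..<s + n + n] @ [s + n + n]"
        unfolding e using n1 by (intro upt_Suc_append) simp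
      then have "W u n (t + 1) = map u [s + n + 1..<s + n + n] @ [u (s + n + n)]" unfolding W_def t by simp
      moreover have "map u [s + n + 1..<s + n + n] = replicate (n - 1) False"
      proof -
        have "map u [s + n + 1..<s + n + n] = replicate (s + n + n - (s + n + 1)) False"
        proof (rule map_const, intro allI impI)
          fix i assume i: "s + n + 1 \<le> i \<and> i < s + n + n"
          then have "u (i - n)" using allT by auto
          moreover have "u (i - n + n) = (\<not> u (i - n))" using anti[rule_format, of "i - n"] by blast
          ultimately show "u i = False" using i by simp
        qed
        then show ?thesis by simp
      qed
      moreover have "u (s + n + n) = True" using anti[rule_format, of "s + n"] anti[rule_format, of s] allT[of s] n1 by simp
      ultimately show ?thesis by simp
    qed
    have "D (W u n s) = replicate n 1" unfolding D_def Ws using pacc_repT[of n "[]"] by simp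
    moreover have "D (W u n (t + 1)) = replicate (n - 1) 0 @ [int n]" unfolding D_def Wt
      using pacc_repF[of 0 "n - 1" "[True]"] n1 by simp
    ultimately show ?thesis using crawl_ones[OF n1] by simp
  qed
qed



definition nx :: "(nat \<Rightarrow> bool) \<Rightarrow> nat \<Rightarrow> nat" where
  "nx u s = (LEAST t. s \<le> t \<and> \<not> u t) + 1"

definition F :: "(nat \<Rightarrow> bool) \<Rightarrow> nat \<Rightarrow> nat" where
  "F u t = (\<Sum>i<t. if u i then 0 else 1)"

definition pz :: "(nat \<Rightarrow> bool) \<Rightarrow> nat \<Rightarrow> bool" where
  "pz u t \<longleftrightarrow> t \<ge> 1 \<and> \<not> u (t - 1)"

lemma F_split: "a \<le> b \<Longrightarrow> F u b = F u a + (\<Sum>i\<in>{a..<b}. if u i then 0 else 1)"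
proof (induction b rule: dec_induct)
  case base then show ?case by simp
next
  case (step b) then show ?case by (simp add: F_def)
qed

lemma nx_props:
  assumes anti: "\<forall>i. u (i + n) = (\<not> u i)"
  shows "pz u (nx u s) \<and> F u (nx u s) = F u s + 1"
proof -
  define t where "t = (LEAST t. s \<le> t \<and> \<not> u t)"
  have ex: "s \<le> s + n \<and> \<not> u (s + n) \<or> (s \<le> s \<and> \<not> u s)" using anti[rule_format, of s] by auto
  have "s \<le> t \<and> \<not> u t" unfolding t_def by (rule LeastI_ex) (use ex in blast)
  then have st: "s \<le> t" and ut: "\<not> u t" by auto
  have before: "u i" if "s \<le> i" "i < t" for i
    using not_less_Least[of i "\<lambda>t. s \<le> t \<and> \<not> u t"] that unfolding t_def by blast
  have "(\<Sum>i\<in>{s..<t}. if u i then 0 else 1::nat) = 0" using before by simp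
  then have "(\<Sum>i\<in>{s..<t + 1}. if u i then 0 else 1::nat) = 1" using st ut by simp
  then have "F u (t + 1) = F u s + 1" using F_split[of s "t + 1" u] st by simp
  moreover have "pz u (t + 1)" unfolding pz_def using ut by simp
  ultimately show ?thesis unfolding nx_def t_def by simp
qed

lemma pz_mono:
  assumes "pz u t'" "t < t'"
  shows "F u t < F u t'"
proof -
  have "F u t' = F u t + (\<Sum>i\<in>{t..<t'}. if u i then 0 else 1)" using F_split[of t t' u] assms by simp
  moreover have "(if u (t' - 1) then 0 else 1::nat) \<le> (\<Sum>i\<in>{t..<t'}. if u i then 0 else 1)"
    by (rule member_le_sum) (use assms in \<open>auto simp: pz_def\<close>)
  moreover have "\<not> u (t' - 1)" using assms unfolding pz_def by simp
  ultimately show ?thesis by simp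
qed

lemma F_period:
  assumes anti: "\<forall>i. u (i + n) = (\<not> u i)"
  shows "F u (s + 2 * n) = F u s + n"
proof -
  let ?f = "\<lambda>i. if u i then 0 else 1::nat"
  have a: "(\<Sum>i\<in>{s..<s + m}. ?f i + ?f (i + n)) = m" for m
  proof (induction m)
    case (Suc m)
    have "?f (s + m) + ?f (s + m + n) = 1" using anti[rule_format, of "s + m"] by simp
    then show ?case using Suc by simp
  qed simp
  have "(\<Sum>i\<in>{s..<s + 2 * n}. ?f i) = (\<Sum>i\<in>{s..<s + n}. ?f i) + (\<Sum>i\<in>{s + n..<s + n + n}. ?f i)"
    using sum.atLeastLessThan_concat[of s "s + n" "s + n + n" ?f] by (simp add: mult_2 add.assoc)
  also have "(\<Sum>i\<in>{s + n..<s + n + n}. ?f i) = (\<Sum>i\<in>{s..<s + n}. ?f (i + n))"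
    using sum.shift_bounds_nat_ivl[of ?f s n "s + n"] by (simp add: add.commute)
  finally have "(\<Sum>i\<in>{s..<s + 2 * n}. ?f i) = n" using a[of n] by (simp add: sum.distrib)
  then show ?thesis using F_split[of s "s + 2 * n" u] by simp
qed

lemma nx_iter:
  assumes anti: "\<forall>i. u (i + n) = (\<not> u i)"
  shows "pz u s \<Longrightarrow> pz u ((nx u ^^ j) s) \<and> F u ((nx u ^^ j) s) = F u s + j"
proof (induction j)
  case (Suc j)
  then show ?case using nx_props[OF anti, of "(nx u ^^ j) s"] by simp
qed simp

lemma nx_n:
  assumes anti: "\<forall>i. u (i + n) = (\<not> u i)" and n1: "n \<ge> 1" and ps: "pz u s"
  shows "(nx u ^^ n) s = s + 2 * n"
proof -
  have p1: "pz u ((nx u ^^ n) s)" and f1: "F u ((nx u ^^ n) s) = F u s + n"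
    using nx_iter[OF anti ps, of n] by auto
  have "s - 1 + n + n = s + 2 * n - 1" using ps unfolding pz_def by simp
  then have p2: "pz u (s + 2 * n)" using ps anti[rule_format, of "s - 1"] anti[rule_format, of "s - 1 + n"]
    unfolding pz_def by simp
  have f2: "F u (s + 2 * n) = F u s + n" using F_period[OF anti] .
  show ?thesis
  proof (rule linorder_cases[of "(nx u ^^ n) s" "s + 2 * n"])
    assume a: "(nx u ^^ n) s < s + 2 * n"
    then show ?thesis using pz_mono[OF p2 a] f1 f2 by auto
  next
    assume a: "(nx u ^^ n) s > s + 2 * n"
    then show ?thesis using pz_mono[OF p1 a] f1 f2 by auto
  qed
qed

lemma W_period:
  assumes anti: "\<forall>i. u (i + n) = (\<not> u i)"
  shows "W u n (s + 2 * n) = W u n s"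
  unfolding W_def
proof (rule nth_equalityI)
  fix i assume "i < length (map u [s + 2 * n..<s + 2 * n + n])"
  then have "i < n" by simp
  have "u (s + i + n + n) = u (s + i)" using anti[rule_format, of "s + i"] anti[rule_format, of "s + i + n"] by simp
  then show "map u [s + 2 * n..<s + 2 * n + n] ! i = map u [s..<s + n] ! i"
    using \<open>i < n\<close> by (simp add: mult_2 add.commute add.left_commute)
qed simp

lemma step_nx:
  assumes anti: "\<forall>i. u (i + n) = (\<not> u i)" and n1: "n \<ge> 1" and ps: "pz u t"
  shows "crawl n (D (W u n t)) = D (W u n (nx u t))"
  unfolding nx_def by (rule step[OF anti n1]) (use ps in \<open>auto simp: pz_def\<close>)

lemma crawl_iter:
  assumes anti: "\<forall>i. u (i + n) = (\<not> u i)" and n1: "n \<ge> 1" and ps: "pz u s"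
  shows "(crawl n ^^ j) (D (W u n s)) = D (W u n ((nx u ^^ j) s))"
proof (induction j)
  case (Suc j)
  have p: "pz u ((nx u ^^ j) s)" using nx_iter[OF anti ps, of j] by simp
  have "crawl n (D (W u n ((nx u ^^ j) s))) = D (W u n (nx u ((nx u ^^ j) s)))"
    using step_nx[OF anti n1 p] .
  then show ?case using Suc by simp
qed simp



theorem mainTheorem13:
  fixes n :: nat and c :: "int list"
  assumes "n \<ge> 1" and "c \<in> M n"
  shows "crawl n c \<in> M n \<and> (crawl n ^^ n) c = c"
proof -
  have n1: "n \<ge> 1" using assms(1) .
  obtain w where lw: "length w = n" and wne: "w \<noteq> []" and wl: "last w = True" and Dw: "D w = c"
    using M_D[OF assms] by blast
  define u where "u i = (if even (i div n) then w ! (i mod n) else \<not> w ! (i mod n))" for i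
  have anti: "\<forall>i. u (i + n) = (\<not> u i)"
  proof
    fix i
    have "(i + n) div n = Suc (i div n)" "(i + n) mod n = i mod n" using n1 by (simp_all add: div_add_self2)
    then show "u (i + n) = (\<not> u i)" unfolding u_def by simp
  qed
  define s0 where "s0 = 2 * n"
  have W0: "W u n s0 = w"
  proof (rule nth_equalityI)
    show "length (W u n s0) = length w" unfolding W_def using lw by simp
  next
    fix i assume "i < length (W u n s0)"
    then have i: "i < n" unfolding W_def by simp
    have "(2 * n + i) div n = 2" "(2 * n + i) mod n = i" using i by auto
    then show "W u n s0 ! i = w ! i" unfolding W_def s0_def u_def using i by simp
  qed
  have e: "2 * n - 1 = (n - 1) + n" using n1 by simp
  have d1: "((n - 1) + n) div n = (n - 1) div n + 1" by (rule div_add_self2) (use n1 in simp)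
  have d2: "((n - 1) + n) mod n = (n - 1) mod n" by (rule mod_add_self2)
  have "(2 * n - 1) div n = 1" "(2 * n - 1) mod n = n - 1" unfolding e d1 d2 using n1 by simp_all
  then have "\<not> u (2 * n - 1)" unfolding u_def using wl wne lw by (simp add: last_conv_nth)
  then have ps: "pz u s0" unfolding pz_def s0_def using n1 by simp
  have c0: "c = D (W u n s0)" using W0 Dw by simp
  have p1: "pz u (nx u s0)" using nx_iter[OF anti ps, of 1] by simp
  have "crawl n c = D (W u n (nx u s0))" using step_nx[OF anti n1 ps] c0 by simp
  moreover have "D (W u n (nx u s0)) \<in> M n"
  proof (rule D_M)
    show "length (W u n (nx u s0)) = n" unfolding W_def by simp
    show "W u n (nx u s0) \<noteq> []" unfolding W_def using n1 by simp
    have "nx u s0 - 1 + n = nx u s0 + n - 1" using p1 unfolding pz_def by simp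
    then have "u (nx u s0 + n - 1)" using anti[rule_format, of "nx u s0 - 1"] p1 unfolding pz_def by simp
    then show "last (W u n (nx u s0)) = True" unfolding W_def using n1 by (simp add: last_map)
  qed
  moreover have "(crawl n ^^ n) c = c"
    using crawl_iter[OF anti n1 ps, of n] nx_n[OF anti n1 ps] W_period[OF anti, of s0] c0 by simp
  ultimately show ?thesis by simp
qed

end
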